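(* Let $\alpha\in(1,\infty)$, let $p_{Y\mid X}$ be a channel between finite sets $\mathcal X,\mathcal Y$, and for a distribution $p_X$ on $\mathcal X$, a joint distribution $\tilde q_{X,Y}$ on $\mathcal X\times\mathcal Y$ with $X$-marginal $\tilde q_X$, and a reverse channel $r_{X\mid Y}$, define $$\tilde F_\alpha^{\mathrm{LP}}(p_X,\tilde q_{X,Y},r_{X\mid Y}):=\frac{\alpha}{1-\alpha}D(\tilde q_{X,Y}\|\tilde q_Xp_{Y\mid X})+\mathbb E^{\tilde q_{X,Y}}\!\left[\log\frac{r_{X\mid Y}(X\mid Y)}{\tilde q_X(X)}\right]+\frac{\alpha}{1-\alpha}D(\tilde q_X\|p_X).$$ Then: (1) for fixed $(p_X,\tilde q_{X,Y})$, it is maximized over $r_{X\mid Y}$ by $r^*_{X\mid Y}(x\mid y)=\tilde q_{X,Y}(x,y)/\sum_{x'}\tilde q_{X,Y}(x',y)$; (2) for fixed $(\tilde q_{X,Y},r_{X\mid Y})$, it is maximized over $p_X$ by $p_X^*(x)=\sum_y\tilde q_{X,Y}(x,y)$; (3) for fixed $(p_X,r_{X\mid Y})$, it is maximized over $\tilde q_{X,Y}$ by $\tilde q^*_{X,Y}(x,y)=\hat q_X(x)\hat q_{Y\mid X}(y\mid x)$, where $$\hat q_X(x)=\frac{p_X(x)^{\frac{\alpha}{2\alpha-1}}\big(\sum_yp_{Y\mid X}(y\mid x)r_{X\mid Y}(x\mid y)^{1-\frac1\alpha}\big)^{\frac{\alpha}{2\alpha-1}}}{\sum_{x'}p_X(x')^{\frac{\alpha}{2\alpha-1}}\big(\sum_yp_{Y\mid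 X}(y\mid x')r_{X\mid Y}(x'\mid y)^{1-\frac1\alpha}\big)^{\frac{\alpha}{2\alpha-1}}},\qquad \hat q_{Y\mid X}(y\mid x)=\frac{p_{Y\mid X}(y\mid x)r_{X\mid Y}(x\mid y)^{1-\frac1\alpha}}{\sum_{x'}p_{Y\mid X}(y\mid x')r_{X\mid Y}(x'\mid y)^{1-\frac1\alpha}}.$$
   Context: $\log$ is natural and $D$ is the Kullback–Leibler divergence. A reverse channel $r_{X\mid Y}$ is a family $\{r_{X\mid Y}(\cdot\mid y)\}_{y\in\mathcal Y}$ of distributions on $\mathcal X$. *)

theory Defs
  imports Complex_Main "HOL-Library.Extended_Real"
begin

definition pdist :: "('a::finite \<Rightarrow> real) \<Rightarrow> bool" where
  "pdist P \<longleftrightarrow> (\<forall>a. 0 \<le> P a) \<and> (\<Sum>a\<in>UNIV. P a) = 1"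

text \<open>A channel: a family of distributions indexed by the input.
  For the forward channel, W x y = p(y|x); for a reverse channel, r y x = r(x|y).\<close>
definition channel :: "('a \<Rightarrow> 'b::finite \<Rightarrow> real) \<Rightarrow> bool" where
  "channel W \<longleftrightarrow> (\<forall>a. pdist (W a))"

definition joint_pdist :: "('a::finite \<Rightarrow> 'b::finite \<Rightarrow> real) \<Rightarrow> bool" where
  "joint_pdist q \<longleftrightarrow> (\<forall>x y. 0 \<le> q x y) \<and> (\<Sum>x\<in>UNIV. \<Sum>y\<in>UNIV. q x y) = 1"

definition xmarg :: "('a \<Rightarrow> 'b::finite \<Rightarrow> real) \<Rightarrow> 'a \<Rightarrow> real" where
  "xmarg q x = (\<Sum>y\<in>UNIV. q x y)"

definition ymarg :: "('a::finite \<Rightarrow> 'b \<Rightarrow> real) \<Rightarrow> 'b \<Rightarrow> real" where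
  "ymarg q y = (\<Sum>x\<in>UNIV. q x y)"

definition kl_term :: "real \<Rightarrow> real \<Rightarrow> ereal" where
  "kl_term a b = (if a = 0 then 0 else if b = 0 then \<infinity> else ereal (a * ln (a / b)))"

definition KL :: "('a::finite \<Rightarrow> real) \<Rightarrow> ('a \<Rightarrow> real) \<Rightarrow> ereal" where
  "KL P Q = (\<Sum>a\<in>UNIV. kl_term (P a) (Q a))"

definition exp_log_term :: "('a::finite \<Rightarrow> 'b::finite \<Rightarrow> real) \<Rightarrow> ('b \<Rightarrow> 'a \<Rightarrow> real) \<Rightarrow> ereal" where
  "exp_log_term q r = (\<Sum>x\<in>UNIV. \<Sum>y\<in>UNIV.
      (if q x y = 0 then 0 else if r y x = 0 then -\<infinity>
       else ereal (q x y * ln (r y x / xmarg q x))))"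

definition F_LP :: "real \<Rightarrow> ('a::finite \<Rightarrow> 'b::finite \<Rightarrow> real) \<Rightarrow> ('a \<Rightarrow> real)
    \<Rightarrow> ('a \<Rightarrow> 'b \<Rightarrow> real) \<Rightarrow> ('b \<Rightarrow> 'a \<Rightarrow> real) \<Rightarrow> ereal" where
  "F_LP \<alpha> W p q r =
     ereal (\<alpha> / (1 - \<alpha>)) * KL (\<lambda>(x, y). q x y) (\<lambda>(x, y). xmarg q x * W x y)
     + exp_log_term q r
     + ereal (\<alpha> / (1 - \<alpha>)) * KL (xmarg q) p"

definition Zc :: "real \<Rightarrow> ('a \<Rightarrow> 'b::finite \<Rightarrow> real) \<Rightarrow> ('b \<Rightarrow> 'a \<Rightarrow> real) \<Rightarrow> 'a \<Rightarrow> real" where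
  "Zc \<alpha> W r x = (\<Sum>y\<in>UNIV. W x y * r y x powr (1 - 1 / \<alpha>))"

definition qhatX_num :: "real \<Rightarrow> ('a \<Rightarrow> 'b::finite \<Rightarrow> real) \<Rightarrow> ('a \<Rightarrow> real) \<Rightarrow> ('b \<Rightarrow> 'a \<Rightarrow> real) \<Rightarrow> 'a \<Rightarrow> real" where
  "qhatX_num \<alpha> W p r x = p x powr (\<alpha> / (2 * \<alpha> - 1)) * Zc \<alpha> W r x powr (\<alpha> / (2 * \<alpha> - 1))"

definition qhatX :: "real \<Rightarrow> ('a::finite \<Rightarrow> 'b::finite \<Rightarrow> real) \<Rightarrow> ('a \<Rightarrow> real) \<Rightarrow> ('b \<Rightarrow> 'a \<Rightarrow> real) \<Rightarrow> 'a \<Rightarrow> real" where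
  "qhatX \<alpha> W p r x = qhatX_num \<alpha> W p r x / (\<Sum>x'\<in>UNIV. qhatX_num \<alpha> W p r x')"

definition qhatYX :: "real \<Rightarrow> ('a \<Rightarrow> 'b::finite \<Rightarrow> real) \<Rightarrow> ('b \<Rightarrow> 'a \<Rightarrow> real) \<Rightarrow> 'a \<Rightarrow> 'b \<Rightarrow> real" where
  "qhatYX \<alpha> W r x y = W x y * r y x powr (1 - 1 / \<alpha>) / Zc \<alpha> W r x"

definition qstar :: "real \<Rightarrow> ('a::finite \<Rightarrow> 'b::finite \<Rightarrow> real) \<Rightarrow> ('a \<Rightarrow> real) \<Rightarrow> ('b \<Rightarrow> 'a \<Rightarrow> real) \<Rightarrow> 'a \<Rightarrow> 'b \<Rightarrow> real" where
  "qstar \<alpha> W p r x y = qhatX \<alpha> W p r x * qhatYX \<alpha> W r x y"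

end

theory Submission
  imports Defs
begin

lemma sum_Minf:
  fixes f :: "'a \<Rightarrow> ereal"
  assumes "finite A" "b \<in> A" "f b = -\<infinity>" "\<forall>a\<in>A. f a \<noteq> \<infinity>"
  shows "sum f A = -\<infinity>"
proof -
  have "sum f A = f b + sum f (A - {b})" using assms by (simp add: sum.remove)
  moreover have "sum f (A - {b}) \<noteq> \<infinity>" using assms by (simp add: sum_Pinfty)
  ultimately show ?thesis using assms by simp
qed

lemma sum_pair_UNIV:
  "(\<Sum>a\<in>(UNIV::('a::finite \<times> 'b::finite) set). f a) = (\<Sum>x\<in>UNIV. \<Sum>y\<in>UNIV. f (x, y))"
  by (simp add: sum.cartesian_product flip: UNIV_Times_UNIV)

lemma KL_eq:
  fixes P Q :: "'a::finite \<Rightarrow> real"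
  shows "KL P Q = (if \<exists>a. P a \<noteq> 0 \<and> Q a = 0 then \<infinity>
                   else ereal (\<Sum>a\<in>UNIV. P a * ln (P a / Q a)))"
proof (cases "\<exists>a. P a \<noteq> 0 \<and> Q a = 0")
  case True
  then obtain a where "P a \<noteq> 0" "Q a = 0" by blast
  then have "kl_term (P a) (Q a) = \<infinity>" by (simp add: kl_term_def)
  then have "KL P Q = \<infinity>" unfolding KL_def by (subst sum_Pinfty) auto
  then show ?thesis using True by simp
next
  case False
  have "kl_term (P a) (Q a) = ereal (P a * ln (P a / Q a))" for a
    using False by (auto simp: kl_term_def)
  then show ?thesis using False unfolding KL_def by simp
qed

lemma exp_log_eq:
  fixes q :: "'a::finite \<Rightarrow> 'b::finite \<Rightarrow> real"
  shows "exp_log_term q r = (if \<exists>x y. q x y \<noteq> 0 \<and> r y x = 0 then -\<infinity>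
            else ereal (\<Sum>x\<in>UNIV. \<Sum>y\<in>UNIV. q x y * ln (r y x / xmarg q x)))"
proof (cases "\<exists>x y. q x y \<noteq> 0 \<and> r y x = 0")
  case True
  then obtain x0 y0 where h: "q x0 y0 \<noteq> 0" "r y0 x0 = 0" by blast
  define g where "g x y = (if q x y = 0 then 0 else if r y x = 0 then -\<infinity>
       else ereal (q x y * ln (r y x / xmarg q x)))" for x y
  have ni: "g x y \<noteq> \<infinity>" for x y by (simp add: g_def)
  have "sum (g x0) UNIV = -\<infinity>"
    by (rule sum_Minf[of _ y0]) (use h ni in \<open>auto simp: g_def\<close>)
  moreover have "sum (g x) UNIV \<noteq> \<infinity>" for x using ni by (simp add: sum_Pinfty)
  ultimately have "(\<Sum>x\<in>UNIV. sum (g x) UNIV) = -\<infinity>"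
    by (intro sum_Minf[of _ x0]) auto
  then show ?thesis using True unfolding exp_log_term_def g_def by simp
next
  case False
  have "(if q x y = 0 then 0 else if r y x = 0 then -\<infinity>
       else ereal (q x y * ln (r y x / xmarg q x))) = ereal (q x y * ln (r y x / xmarg q x))" for x y
    using False by auto
  then show ?thesis using False unfolding exp_log_term_def by simp
qed

lemma gibbs_term:
  fixes a b :: real
  assumes "a \<ge> 0" "b \<ge> 0" "a \<noteq> 0 \<longrightarrow> b \<noteq> 0"
  shows "a * ln (a / b) \<ge> a - b"
proof (cases "a = 0")
  case True then show ?thesis using assms by simp
next
  case False
  then have a: "a > 0" and b: "b > 0" using assms by auto
  have "ln (b / a) \<le> b / a - 1" using a b by (intro ln_le_minus_one) simp
  moreover have "ln (a / b) = - ln (b / a)" using a b by (simp add: ln_div)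
  ultimately have "ln (a / b) \<ge> 1 - b / a" by simp
  then have "a * ln (a / b) \<ge> a * (1 - b / a)" using a by (intro mult_left_mono) auto
  moreover have "a * (1 - b / a) = a - b" using a by (simp add: field_simps)
  ultimately show ?thesis by linarith
qed

lemma gibbs_sum:
  fixes P Q :: "'a \<Rightarrow> real"
  assumes "\<And>a. a \<in> A \<Longrightarrow> P a \<ge> 0 \<and> Q a \<ge> 0 \<and> (P a \<noteq> 0 \<longrightarrow> Q a \<noteq> 0)"
  shows "(\<Sum>a\<in>A. P a * ln (P a / Q a)) \<ge> sum P A - sum Q A"
proof -
  have "(\<Sum>a\<in>A. P a * ln (P a / Q a)) \<ge> (\<Sum>a\<in>A. P a - Q a)"
    using assms gibbs_term by (intro sum_mono) blast
  then show ?thesis by (simp add: sum_subtractf)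
qed

definition RF :: "real \<Rightarrow> ('a::finite \<Rightarrow> 'b::finite \<Rightarrow> real) \<Rightarrow> ('a \<Rightarrow> real)
    \<Rightarrow> ('a \<Rightarrow> 'b \<Rightarrow> real) \<Rightarrow> ('b \<Rightarrow> 'a \<Rightarrow> real) \<Rightarrow> real" where
  "RF \<alpha> W p q r = \<alpha> / (1 - \<alpha>) * (\<Sum>x\<in>UNIV. \<Sum>y\<in>UNIV. q x y * ln (q x y / (xmarg q x * W x y)))
     + (\<Sum>x\<in>UNIV. \<Sum>y\<in>UNIV. q x y * ln (r y x / xmarg q x))
     + \<alpha> / (1 - \<alpha>) * (\<Sum>x\<in>UNIV. xmarg q x * ln (xmarg q x / p x))"

lemma xmarg_ge: "(\<forall>x y. 0 \<le> q x y) \<Longrightarrow> q x y \<le> xmarg (q::'a \<Rightarrow> 'b::finite \<Rightarrow> real) x"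
  unfolding xmarg_def by (rule member_le_sum) auto

lemma F_LP_eq:
  fixes W :: "'a::finite \<Rightarrow> 'b::finite \<Rightarrow> real"
  assumes "\<alpha> > 1" "\<forall>x y. 0 \<le> q x y"
  shows "F_LP \<alpha> W p q r = (if (\<exists>x y. q x y \<noteq> 0 \<and> (W x y = 0 \<or> r y x = 0)) \<or>
      (\<exists>x. xmarg q x \<noteq> 0 \<and> p x = 0) then -\<infinity> else ereal (RF \<alpha> W p q r))"
proof -
  have c: "\<alpha> / (1 - \<alpha>) < 0" using assms by (simp add: divide_pos_neg)
  have b1: "(\<exists>a. (\<lambda>(x, y). q x y) a \<noteq> 0 \<and> (\<lambda>(x, y). xmarg q x * W x y) a = 0)
      \<longleftrightarrow> (\<exists>x y. q x y \<noteq> 0 \<and> W x y = 0)"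
  proof
    assume "\<exists>a. (\<lambda>(x, y). q x y) a \<noteq> 0 \<and> (\<lambda>(x, y). xmarg q x * W x y) a = 0"
    then obtain x y where h: "q x y \<noteq> 0" "xmarg q x * W x y = 0" by auto
    have "xmarg q x \<ge> q x y" using assms(2) by (rule xmarg_ge)
    then have "xmarg q x \<noteq> 0" using h assms(2) by (metis order.antisym)
    then show "\<exists>x y. q x y \<noteq> 0 \<and> W x y = 0" using h by auto
  qed auto
  have K1: "KL (\<lambda>(x, y). q x y) (\<lambda>(x, y). xmarg q x * W x y) =
     (if \<exists>x y. q x y \<noteq> 0 \<and> W x y = 0 then \<infinity> else
      ereal (\<Sum>x\<in>UNIV. \<Sum>y\<in>UNIV. q x y * ln (q x y / (xmarg q x * W x y))))"
    unfolding KL_eq b1 by (simp add: sum_pair_UNIV)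
  have K2: "KL (xmarg q) p = (if \<exists>x. xmarg q x \<noteq> 0 \<and> p x = 0 then \<infinity> else
      ereal (\<Sum>x\<in>UNIV. xmarg q x * ln (xmarg q x / p x)))"
    by (simp add: KL_eq)
  show ?thesis
    unfolding F_LP_def K1 K2 exp_log_eq RF_def using c
    by (auto simp: ereal_mult_infty)
qed

lemma key_alg0:
  fixes b g e c :: real
  assumes "g * (1 + b) = b" "b * e = 1" "c = -b"
  shows "c*(Lq - (LX+LW)) + (Lr - LX) + c*(LX - Lp) =
    (1 + b)*LS - b*(Lq - ((g*Lp + g*LZ - LS) + (LW + e*Lr - LZ)))
     - (LX - (g*Lp + g*LZ - LS))"
proof -
  have r1: "LZ*b = LZ*g + LZ*(b*g)" "Lp*b = Lp*g + Lp*(b*g)" "Lr*(b*e) = Lr"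
    using assms(1,2) by (metis distrib_left mult.commute mult_1_right)+
  show ?thesis using assms(3) r1 by (simp add: algebra_simps)
qed
lemma key_alg:
  fixes \<alpha> :: real
  assumes "\<alpha> > 1"
  shows "\<alpha>/(1-\<alpha>)*(Lq - (LX+LW)) + (Lr - LX) + \<alpha>/(1-\<alpha>)*(LX - Lp) =
    (1 + \<alpha>/(\<alpha>-1))*LS - \<alpha>/(\<alpha>-1)*(Lq - ((\<alpha>/(2*\<alpha>-1)*Lp + \<alpha>/(2*\<alpha>-1)*LZ - LS) + (LW + (1-1/\<alpha>)*Lr - LZ)))
     - (LX - (\<alpha>/(2*\<alpha>-1)*Lp + \<alpha>/(2*\<alpha>-1)*LZ - LS))"
proof (rule key_alg0)
  have h: "1 - \<alpha> \<noteq> 0" "\<alpha> - 1 \<noteq> 0" "2*\<alpha>-1 \<noteq> 0" "\<alpha> \<noteq> 0" using assms by auto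
  have "1 + \<alpha>/(\<alpha>-1) = (2*\<alpha>-1)/(\<alpha>-1)" using h by (simp add: field_simps)
  then show "\<alpha>/(2*\<alpha>-1) * (1 + \<alpha>/(\<alpha>-1)) = \<alpha>/(\<alpha>-1)" using h by simp
  show "\<alpha>/(\<alpha>-1) * (1 - 1/\<alpha>) = 1" using h by (simp add: field_simps)
  show "\<alpha>/(1-\<alpha>) = - (\<alpha>/(\<alpha>-1))" using h by (simp add: field_simps)
qed

lemma chan_nonneg: "channel W \<Longrightarrow> 0 \<le> W x y"
  by (simp add: channel_def pdist_def)

lemma chan_sum: "channel W \<Longrightarrow> (\<Sum>y\<in>UNIV. W x y) = 1"
  by (simp add: channel_def pdist_def)

lemma Zc_nonneg: "channel W \<Longrightarrow> 0 \<le> Zc \<alpha> W r x"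
  unfolding Zc_def by (intro sum_nonneg mult_nonneg_nonneg) (auto simp: chan_nonneg)

lemma num_nonneg: "0 \<le> qhatX_num \<alpha> W p r x"
  unfolding qhatX_num_def by simp

lemma qhatX_nonneg: "0 \<le> qhatX \<alpha> W p r x"
  unfolding qhatX_def by (intro divide_nonneg_nonneg sum_nonneg) (auto simp: num_nonneg)

lemma qhatYX_nonneg: "channel W \<Longrightarrow> 0 \<le> qhatYX \<alpha> W r x y"
  unfolding qhatYX_def by (intro divide_nonneg_nonneg mult_nonneg_nonneg) (auto simp: chan_nonneg Zc_nonneg)

lemma qstar_nonneg: "channel W \<Longrightarrow> 0 \<le> qstar \<alpha> W p r x y"
  unfolding qstar_def by (intro mult_nonneg_nonneg qhatX_nonneg qhatYX_nonneg)

lemma xmarg_qstar: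
  assumes "channel W"
  shows "xmarg (qstar \<alpha> W p r) x = qhatX \<alpha> W p r x"
proof (cases "Zc \<alpha> W r x = 0")
  case True
  then have "qhatX_num \<alpha> W p r x = 0" by (simp add: qhatX_num_def)
  then have "qhatX \<alpha> W p r x = 0" by (simp add: qhatX_def)
  then show ?thesis by (simp add: xmarg_def qstar_def)
next
  case False
  have "(\<Sum>y\<in>UNIV. qhatYX \<alpha> W r x y) = Zc \<alpha> W r x / Zc \<alpha> W r x"
    unfolding qhatYX_def by (simp add: Zc_def flip: sum_divide_distrib)
  then have "(\<Sum>y\<in>UNIV. qhatYX \<alpha> W r x y) = 1" using False by simp
  then show ?thesis by (simp add: xmarg_def qstar_def flip: sum_distrib_left)
qed

lemma sum_qhatX:
  assumes "(\<Sum>x\<in>UNIV. qhatX_num \<alpha> W p r x) > 0"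
  shows "(\<Sum>x\<in>UNIV. qhatX \<alpha> W p r x) = 1"
  using assms unfolding qhatX_def by (simp add: sum_divide_distrib[symmetric])

lemma joint_qstar:
  assumes "channel W" "(\<Sum>x\<in>UNIV. qhatX_num \<alpha> W p r x) > 0"
  shows "joint_pdist (qstar \<alpha> W p r)"
proof -
  have "(\<Sum>x\<in>UNIV. \<Sum>y\<in>UNIV. qstar \<alpha> W p r x y) = (\<Sum>x\<in>UNIV. qhatX \<alpha> W p r x)"
    using xmarg_qstar[OF assms(1)] by (simp add: xmarg_def)
  then show ?thesis using sum_qhatX[OF assms(2)] qstar_nonneg[OF assms(1)]
    by (simp add: joint_pdist_def)
qed

lemma good_qstar:
  assumes "channel W"
  shows "\<forall>x y. qstar \<alpha> W p r x y \<noteq> 0 \<longrightarrow> W x y \<noteq> 0 \<and> r y x \<noteq> 0"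
    and "\<forall>x. xmarg (qstar \<alpha> W p r) x \<noteq> 0 \<longrightarrow> p x \<noteq> 0"
  using assms
  by (auto simp: qstar_def qhatYX_def qhatX_def qhatX_num_def xmarg_qstar)



lemma RF_ident:
  fixes W :: "'a::finite \<Rightarrow> 'b::finite \<Rightarrow> real"
  assumes a: "\<alpha> > 1" and W: "channel W" and p: "pdist p" and r: "channel r"
    and S: "(\<Sum>x\<in>UNIV. qhatX_num \<alpha> W p r x) > 0"
    and q: "joint_pdist q"
    and g1: "\<forall>x y. q x y \<noteq> 0 \<longrightarrow> W x y \<noteq> 0 \<and> r y x \<noteq> 0"
    and g2: "\<forall>x. xmarg q x \<noteq> 0 \<longrightarrow> p x \<noteq> 0"
  shows "RF \<alpha> W p q r = (1 + \<alpha>/(\<alpha>-1)) * ln (\<Sum>x\<in>UNIV. qhatX_num \<alpha> W p r x)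
     - \<alpha>/(\<alpha>-1) * (\<Sum>x\<in>UNIV. \<Sum>y\<in>UNIV. q x y * ln (q x y / qstar \<alpha> W p r x y))
     - (\<Sum>x\<in>UNIV. xmarg q x * ln (xmarg q x / qhatX \<alpha> W p r x))"
proof -
  define S where "S = (\<Sum>x\<in>UNIV. qhatX_num \<alpha> W p r x)"
  define c where "c = \<alpha>/(1-\<alpha>)"
  define b where "b = \<alpha>/(\<alpha>-1)"
  define g where "g = \<alpha>/(2*\<alpha>-1)"
  define e where "e = 1 - 1/\<alpha>"
  have Spos: "S > 0" using S by (simp add: S_def)
  have qnn: "0 \<le> q x y" for x y using q by (simp add: joint_pdist_def)
  have trm: "c * (q x y * ln (q x y / (xmarg q x * W x y))) + q x y * ln (r y x / xmarg q x)
      + c * (q x y * ln (xmarg q x / p x))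
    = (1+b) * (q x y * ln S) - b * (q x y * ln (q x y / qstar \<alpha> W p r x y))
      - q x y * ln (xmarg q x / qhatX \<alpha> W p r x)" for x y
  proof (cases "q x y = 0")
    case True then show ?thesis by simp
  next
    case False
    have qp: "q x y > 0" using False qnn[of x y] by simp
    have qX: "xmarg q x > 0" using xmarg_ge[of q x y] qnn qp by force
    have Wp: "W x y > 0" using g1 False chan_nonneg[OF W, of x y] by force
    have rp: "r y x > 0" using g1 False chan_nonneg[OF r, of y x] by force
    have "p x \<ge> 0" using p by (simp add: pdist_def)
    moreover have "p x \<noteq> 0" using g2 qX by force
    ultimately have pp: "p x > 0" by simp
    have rpow: "r y x powr e > 0" using rp by simp
    have "W x y * r y x powr e \<le> Zc \<alpha> W r x" unfolding Zc_def e_def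
      by (rule member_le_sum) (auto intro!: mult_nonneg_nonneg simp: chan_nonneg[OF W])
    moreover have "W x y * r y x powr e > 0" using Wp rpow by simp
    ultimately have Zp: "Zc \<alpha> W r x > 0" by linarith
    have num: "qhatX_num \<alpha> W p r x = p x powr g * Zc \<alpha> W r x powr g"
      by (simp add: qhatX_num_def g_def)
    have nump: "qhatX_num \<alpha> W p r x > 0" using num pp Zp by simp
    have hX: "qhatX \<alpha> W p r x = qhatX_num \<alpha> W p r x / S" by (simp add: qhatX_def S_def)
    have hXp: "qhatX \<alpha> W p r x > 0" using hX nump Spos by simp
    have hY: "qhatYX \<alpha> W r x y = W x y * r y x powr e / Zc \<alpha> W r x"
      by (simp add: qhatYX_def e_def)
    have hYp: "qhatYX \<alpha> W r x y > 0" using hY Wp rpow Zp by simp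
    have lhX: "ln (qhatX \<alpha> W p r x) = g * ln (p x) + g * ln (Zc \<alpha> W r x) - ln S"
      using hX num nump Spos pp Zp by (simp add: ln_divide_pos ln_mult_pos ln_powr)
    have lhY: "ln (qhatYX \<alpha> W r x y) = ln (W x y) + e * ln (r y x) - ln (Zc \<alpha> W r x)"
      using hY Wp rpow Zp by (simp add: ln_divide_pos ln_mult_pos ln_powr)
    have lqs: "ln (qstar \<alpha> W p r x y) = ln (qhatX \<alpha> W p r x) + ln (qhatYX \<alpha> W r x y)"
      using hXp hYp by (simp add: qstar_def ln_mult_pos)
    have qsp: "qstar \<alpha> W p r x y > 0" using hXp hYp by (simp add: qstar_def)
    have e1: "ln (q x y / (xmarg q x * W x y)) = ln (q x y) - (ln (xmarg q x) + ln (W x y))"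
      using qp qX Wp by (simp add: ln_divide_pos ln_mult_pos)
    have e2: "ln (r y x / xmarg q x) = ln (r y x) - ln (xmarg q x)"
      using rp qX by (simp add: ln_divide_pos)
    have e3: "ln (xmarg q x / p x) = ln (xmarg q x) - ln (p x)"
      using pp qX by (simp add: ln_divide_pos)
    have e4: "ln (q x y / qstar \<alpha> W p r x y) = ln (q x y) - ((g * ln (p x) + g * ln (Zc \<alpha> W r x) - ln S)
        + (ln (W x y) + e * ln (r y x) - ln (Zc \<alpha> W r x)))"
      using qp qsp lqs lhX lhY by (simp add: ln_divide_pos)
    have e5: "ln (xmarg q x / qhatX \<alpha> W p r x) = ln (xmarg q x) - (g * ln (p x) + g * ln (Zc \<alpha> W r x) - ln S)"
      using qX hXp lhX by (simp add: ln_divide_pos)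
    have K: "c*(ln (q x y) - (ln (xmarg q x) + ln (W x y))) + (ln (r y x) - ln (xmarg q x))
        + c*(ln (xmarg q x) - ln (p x))
      = (1 + b)*ln S - b*(ln (q x y) - ((g * ln (p x) + g * ln (Zc \<alpha> W r x) - ln S)
        + (ln (W x y) + e * ln (r y x) - ln (Zc \<alpha> W r x))))
        - (ln (xmarg q x) - (g * ln (p x) + g * ln (Zc \<alpha> W r x) - ln S))"
      unfolding c_def b_def g_def e_def by (rule key_alg[OF a])
    then have "q x y * (c*(ln (q x y) - (ln (xmarg q x) + ln (W x y))) + (ln (r y x) - ln (xmarg q x))
        + c*(ln (xmarg q x) - ln (p x)))
      = q x y * ((1 + b)*ln S - b*(ln (q x y) - ((g * ln (p x) + g * ln (Zc \<alpha> W r x) - ln S)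
        + (ln (W x y) + e * ln (r y x) - ln (Zc \<alpha> W r x))))
        - (ln (xmarg q x) - (g * ln (p x) + g * ln (Zc \<alpha> W r x) - ln S)))" by simp
    then show ?thesis unfolding e1 e2 e3 e4 e5 by (simp add: algebra_simps)
  qed
  have s3: "xmarg q x * L x = (\<Sum>y\<in>UNIV. q x y * L x)" for x and L :: "'a \<Rightarrow> real"
    by (simp add: xmarg_def sum_distrib_right)
  have sq: "(\<Sum>x\<in>UNIV. \<Sum>y\<in>UNIV. q x y) = 1" using q by (simp add: joint_pdist_def)
  have "RF \<alpha> W p q r = (\<Sum>x\<in>UNIV. \<Sum>y\<in>UNIV.
      c * (q x y * ln (q x y / (xmarg q x * W x y))) + q x y * ln (r y x / xmarg q x)
      + c * (q x y * ln (xmarg q x / p x)))"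
    unfolding RF_def c_def
    by (subst s3[where L = "\<lambda>x. ln (xmarg q x / p x)"]) (simp add: sum.distrib sum_distrib_left)
  also have "\<dots> = (\<Sum>x\<in>UNIV. \<Sum>y\<in>UNIV. (1+b) * (q x y * ln S) - b * (q x y * ln (q x y / qstar \<alpha> W p r x y))
      - q x y * ln (xmarg q x / qhatX \<alpha> W p r x))"
    by (simp add: trm)
  also have "\<dots> = (1+b) * ln S * (\<Sum>x\<in>UNIV. \<Sum>y\<in>UNIV. q x y)
      - b * (\<Sum>x\<in>UNIV. \<Sum>y\<in>UNIV. q x y * ln (q x y / qstar \<alpha> W p r x y))
      - (\<Sum>x\<in>UNIV. \<Sum>y\<in>UNIV. q x y * ln (xmarg q x / qhatX \<alpha> W p r x))"
    by (simp add: sum_subtractf sum_distrib_left mult_ac)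
  also have "\<dots> = (1+b) * ln S
      - b * (\<Sum>x\<in>UNIV. \<Sum>y\<in>UNIV. q x y * ln (q x y / qstar \<alpha> W p r x y))
      - (\<Sum>x\<in>UNIV. xmarg q x * ln (xmarg q x / qhatX \<alpha> W p r x))"
    using sq by (subst s3[where L = "\<lambda>x. ln (xmarg q x / qhatX \<alpha> W p r x)"]) simp
  finally show ?thesis by (simp add: S_def b_def)
qed


lemma qstar_pos:
  fixes W :: "'a::finite \<Rightarrow> 'b::finite \<Rightarrow> real"
  assumes W: "channel W" and p: "pdist p" and r: "channel r"
    and S: "(\<Sum>x\<in>UNIV. qhatX_num \<alpha> W p r x) > 0"
    and nz: "W x y \<noteq> 0" "r y x \<noteq> 0" "p x \<noteq> 0"
  shows "qstar \<alpha> W p r x y > 0 \<and> qhatX \<alpha> W p r x > 0"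
proof -
  have Wp: "W x y > 0" using nz chan_nonneg[OF W, of x y] by force
  have rp: "r y x > 0" using nz chan_nonneg[OF r, of y x] by force
  have "p x \<ge> 0" using p by (simp add: pdist_def)
  then have pp: "p x > 0" using nz by simp
  have rpow: "r y x powr (1 - 1/\<alpha>) > 0" using rp by simp
  have "W x y * r y x powr (1 - 1/\<alpha>) \<le> Zc \<alpha> W r x" unfolding Zc_def
    by (rule member_le_sum) (auto intro!: mult_nonneg_nonneg simp: chan_nonneg[OF W])
  moreover have "W x y * r y x powr (1 - 1/\<alpha>) > 0" using Wp rpow by simp
  ultimately have Zp: "Zc \<alpha> W r x > 0" by linarith
  have nump: "qhatX_num \<alpha> W p r x > 0" using pp Zp by (simp add: qhatX_num_def)
  have hXp: "qhatX \<alpha> W p r x > 0" using nump S by (simp add: qhatX_def)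
  have hYp: "qhatYX \<alpha> W r x y > 0" using Wp rpow Zp by (simp add: qhatYX_def)
  show ?thesis using hXp hYp by (simp add: qstar_def)
qed

lemma ymarg_ge: "(\<forall>x y. 0 \<le> q x y) \<Longrightarrow> q x y \<le> ymarg (q::'a::finite \<Rightarrow> 'b \<Rightarrow> real) y"
  unfolding ymarg_def by (rule member_le_sum) auto

lemma part1:
  fixes q :: "'a::finite \<Rightarrow> 'b::finite \<Rightarrow> real"
  assumes q: "joint_pdist q" and r: "channel r" and rs: "channel rs"
    and rsd: "\<forall>y x. ymarg q y \<noteq> 0 \<longrightarrow> rs y x = q x y / ymarg q y"
  shows "exp_log_term q r \<le> exp_log_term q rs"
proof -
  have qnn: "\<forall>x y. 0 \<le> q x y" using q by (simp add: joint_pdist_def)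
  have nb: "\<not> (\<exists>x y. q x y \<noteq> 0 \<and> rs y x = 0)"
  proof clarify
    fix x y assume h: "q x y \<noteq> 0" "rs y x = 0"
    have qp: "q x y > 0" using h qnn by (simp add: order_le_neq_trans)
    then have "ymarg q y > 0" using ymarg_ge[OF qnn, of x y] by linarith
    then show False using h rsd qp by auto
  qed
  show ?thesis
  proof (cases "\<exists>x y. q x y \<noteq> 0 \<and> r y x = 0")
    case True then show ?thesis by (simp add: exp_log_eq)
  next
    case False
    have t: "q x y * ln (r y x / xmarg q x) \<le> q x y * ln (rs y x / xmarg q x) + (r y x * ymarg q y - q x y)"
      for x y
    proof (cases "q x y = 0")
      case True
      have "0 \<le> r y x * ymarg q y" using chan_nonneg[OF r] qnn
        by (simp add: ymarg_def sum_nonneg)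
      then show ?thesis using True by simp
    next
      case qn: False
      have qp: "q x y > 0" using qn qnn by (simp add: order_le_neq_trans)
      have ym: "ymarg q y > 0" using ymarg_ge[OF qnn, of x y] qp by linarith
      have qX: "xmarg q x > 0" using xmarg_ge[OF qnn, of x y] qp by linarith
      have rp: "r y x > 0" using False qn chan_nonneg[OF r, of y x] by force
      have rsv: "rs y x = q x y / ymarg q y" using rsd ym by simp
      have rsp: "rs y x > 0" using rsv qp ym by simp
      have "ln (r y x / rs y x) \<le> r y x / rs y x - 1" using rp rsp by (intro ln_le_minus_one) simp
      moreover have "ln (r y x / rs y x) = ln (r y x / xmarg q x) - ln (rs y x / xmarg q x)"
        using rp rsp qX by (simp add: ln_divide_pos)
      ultimately have "q x y * (ln (r y x / xmarg q x) - ln (rs y x / xmarg q x)) \<le> q x y * (r y x / rs y x - 1)"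
        using qp by (intro mult_left_mono) auto
      moreover have "q x y * (r y x / rs y x - 1) = r y x * ymarg q y - q x y"
        using rsv qp ym by (simp add: right_diff_distrib)
      ultimately show ?thesis by (simp add: algebra_simps)
    qed
    have "(\<Sum>x\<in>UNIV. \<Sum>y\<in>UNIV. q x y * ln (r y x / xmarg q x)) \<le>
       (\<Sum>x\<in>UNIV. \<Sum>y\<in>UNIV. q x y * ln (rs y x / xmarg q x) + (r y x * ymarg q y - q x y))"
      by (intro sum_mono t)
    also have "\<dots> = (\<Sum>x\<in>UNIV. \<Sum>y\<in>UNIV. q x y * ln (rs y x / xmarg q x))
        + ((\<Sum>x\<in>UNIV. \<Sum>y\<in>UNIV. r y x * ymarg q y) - (\<Sum>x\<in>UNIV. \<Sum>y\<in>UNIV. q x y))"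
      by (simp add: sum.distrib sum_subtractf)
    also have "(\<Sum>x\<in>UNIV. \<Sum>y\<in>UNIV. r y x * ymarg q y) = (\<Sum>y\<in>UNIV. ymarg q y)"
      by (subst sum.swap) (simp add: chan_sum[OF r] flip: sum_distrib_right)
    also have "\<dots> = (\<Sum>x\<in>UNIV. \<Sum>y\<in>UNIV. q x y)"
      unfolding ymarg_def by (rule sum.swap)
    finally show ?thesis using False nb by (simp add: exp_log_eq)
  qed
qed


lemma KL_nonneg:
  fixes P Q :: "'a::finite \<Rightarrow> real"
  assumes "pdist P" "pdist Q"
  shows "KL P Q \<ge> 0"
proof (cases "\<exists>a. P a \<noteq> 0 \<and> Q a = 0")
  case True then show ?thesis by (simp add: KL_eq)
next
  case False
  have "(\<Sum>a\<in>UNIV. P a * ln (P a / Q a)) \<ge> sum P UNIV - sum Q UNIV"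
    using False assms by (intro gibbs_sum) (auto simp: pdist_def)
  then show ?thesis using False assms by (simp add: KL_eq pdist_def)
qed

lemma KL_self: "KL P P = 0"
proof -
  have h: "P a * ln (P a / P a) = 0" for a by (cases "P a = 0") simp_all
  have s: "(\<Sum>a\<in>UNIV. P a * ln (P a / P a)) = 0" by (rule sum.neutral) (use h in blast)
  have n: "\<not>(\<exists>a. P a \<noteq> 0 \<and> P a = 0)" by simp
  show ?thesis unfolding KL_eq by (subst if_not_P[OF n]) (simp only: s zero_ereal_def)
qed

lemma ereal_neg_mult_le: "c < 0 \<Longrightarrow> K \<ge> 0 \<Longrightarrow> ereal c * K \<le> 0"
  by (cases K) (auto simp: mult_nonpos_nonneg)

lemma part2:
  fixes W :: "'a::finite \<Rightarrow> 'b::finite \<Rightarrow> real"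
  assumes a: "\<alpha> > 1" and q: "joint_pdist q" and p: "pdist p"
  shows "pdist (xmarg q)" and "F_LP \<alpha> W p q r \<le> F_LP \<alpha> W (xmarg q) q r"
proof -
  show pq: "pdist (xmarg q)" using q
    by (auto simp: pdist_def joint_pdist_def xmarg_def intro: sum_nonneg)
  have c: "\<alpha> / (1 - \<alpha>) < 0" using a by (simp add: divide_pos_neg)
  have "ereal (\<alpha> / (1 - \<alpha>)) * KL (xmarg q) p \<le> 0"
    by (rule ereal_neg_mult_le[OF c KL_nonneg[OF pq p]])
  then have "A + ereal (\<alpha> / (1 - \<alpha>)) * KL (xmarg q) p \<le> A + 0" for A
    by (rule add_left_mono)
  then show "F_LP \<alpha> W p q r \<le> F_LP \<alpha> W (xmarg q) q r"
    unfolding F_LP_def KL_self by simp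
qed

lemma part3:
  fixes W :: "'a::finite \<Rightarrow> 'b::finite \<Rightarrow> real"
  assumes a: "\<alpha> > 1" and W: "channel W" and p: "pdist p" and r: "channel r"
    and S: "(\<Sum>x\<in>UNIV. qhatX_num \<alpha> W p r x) > 0"
    and q: "joint_pdist q"
  shows "F_LP \<alpha> W p q r \<le> F_LP \<alpha> W p (qstar \<alpha> W p r) r"
proof -
  define qs where "qs = qstar \<alpha> W p r"
  define b where "b = \<alpha>/(\<alpha>-1)"
  define LS where "LS = ln (\<Sum>x\<in>UNIV. qhatX_num \<alpha> W p r x)"
  have bp: "b > 0" using a by (simp add: b_def)
  have jqs: "joint_pdist qs" unfolding qs_def by (rule joint_qstar[OF W S])
  have qsnn: "\<forall>x y. 0 \<le> qs x y" using jqs by (simp add: joint_pdist_def)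
  note gq = good_qstar[OF W, of \<alpha> p r, folded qs_def]
  have xqs: "xmarg qs x = qhatX \<alpha> W p r x" for x unfolding qs_def by (rule xmarg_qstar[OF W])
  have Fqs: "F_LP \<alpha> W p qs r = ereal (RF \<alpha> W p qs r)"
    using F_LP_eq[OF a qsnn] gq by auto
  have z1: "qs x y * ln (qs x y / qstar \<alpha> W p r x y) = 0" for x y
    unfolding qs_def by (cases "qstar \<alpha> W p r x y = 0") simp_all
  have z2: "xmarg qs x * ln (xmarg qs x / qhatX \<alpha> W p r x) = 0" for x
    unfolding xqs by (cases "qhatX \<alpha> W p r x = 0") simp_all
  have RFqs: "RF \<alpha> W p qs r = (1 + b) * LS"
    using RF_ident[OF a W p r S jqs gq] z1 z2 by (simp add: b_def LS_def)
  have qnn: "\<forall>x y. 0 \<le> q x y" using q by (simp add: joint_pdist_def)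
  show ?thesis
  proof (cases "(\<exists>x y. q x y \<noteq> 0 \<and> (W x y = 0 \<or> r y x = 0)) \<or> (\<exists>x. xmarg q x \<noteq> 0 \<and> p x = 0)")
    case True
    then show ?thesis using F_LP_eq[OF a qnn] by simp
  next
    case False
    have g1: "\<forall>x y. q x y \<noteq> 0 \<longrightarrow> W x y \<noteq> 0 \<and> r y x \<noteq> 0" using False by blast
    have g2: "\<forall>x. xmarg q x \<noteq> 0 \<longrightarrow> p x \<noteq> 0" using False by blast
    have Fq: "F_LP \<alpha> W p q r = ereal (RF \<alpha> W p q r)" using F_LP_eq[OF a qnn] False by simp
    have pos: "qs x y > 0 \<and> qhatX \<alpha> W p r x > 0" if "q x y \<noteq> 0" for x y
    proof -
      have "q x y > 0" using that qnn by (simp add: order_le_neq_trans)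
      then have "xmarg q x \<noteq> 0" using xmarg_ge[OF qnn, of x y] by linarith
      then have "p x \<noteq> 0" using g2 by blast
      then show ?thesis using qstar_pos[OF W p r S] g1 that unfolding qs_def by blast
    qed
    have D: "(\<Sum>x\<in>UNIV. \<Sum>y\<in>UNIV. q x y * ln (q x y / qs x y)) \<ge> 0"
    proof -
      have "(\<Sum>x\<in>UNIV. \<Sum>y\<in>UNIV. q x y * ln (q x y / qs x y)) \<ge>
            (\<Sum>x\<in>UNIV. (\<Sum>y\<in>UNIV. q x y) - (\<Sum>y\<in>UNIV. qs x y))"
        by (intro sum_mono gibbs_sum) (auto simp: qnn qsnn dest!: pos)
      moreover have "(\<Sum>x\<in>UNIV. (\<Sum>y\<in>UNIV. q x y) - (\<Sum>y\<in>UNIV. qs x y)) = 0"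
        using q jqs by (simp add: sum_subtractf joint_pdist_def)
      ultimately show ?thesis by linarith
    qed
    have E: "(\<Sum>x\<in>UNIV. xmarg q x * ln (xmarg q x / qhatX \<alpha> W p r x)) \<ge> 0"
    proof -
      have "(\<Sum>x\<in>UNIV. xmarg q x * ln (xmarg q x / qhatX \<alpha> W p r x)) \<ge>
            sum (xmarg q) UNIV - sum (qhatX \<alpha> W p r) UNIV"
      proof (intro gibbs_sum conjI impI)
        fix x
        show "0 \<le> xmarg q x" using qnn by (simp add: xmarg_def sum_nonneg)
        show "0 \<le> qhatX \<alpha> W p r x" by (rule qhatX_nonneg)
        assume "xmarg q x \<noteq> 0"
        then obtain y where "q x y \<noteq> 0" unfolding xmarg_def
          by (metis (mono_tags, lifting) sum.neutral)
        then show "qhatX \<alpha> W p r x \<noteq> 0" using pos by force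
      qed
      moreover have "sum (xmarg q) UNIV - sum (qhatX \<alpha> W p r) UNIV = 0"
        using q sum_qhatX[OF S] by (simp add: xmarg_def joint_pdist_def)
      ultimately show ?thesis by linarith
    qed
    have "RF \<alpha> W p q r = (1 + b) * LS - b * (\<Sum>x\<in>UNIV. \<Sum>y\<in>UNIV. q x y * ln (q x y / qs x y))
       - (\<Sum>x\<in>UNIV. xmarg q x * ln (xmarg q x / qhatX \<alpha> W p r x))"
      using RF_ident[OF a W p r S q g1 g2] by (simp add: b_def LS_def qs_def)
    moreover have "b * (\<Sum>x\<in>UNIV. \<Sum>y\<in>UNIV. q x y * ln (q x y / qs x y)) \<ge> 0"
      using bp D by simp
    ultimately have "RF \<alpha> W p q r \<le> RF \<alpha> W p qs r" using RFqs E by linarith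
    then show ?thesis using Fq Fqs by (simp add: qs_def)
  qed
qed

theorem proposition6:
  fixes \<alpha> :: real
    and W :: "'x::finite \<Rightarrow> 'y::finite \<Rightarrow> real"
  assumes "\<alpha> > 1"
    and "channel W"
  shows
    "(\<forall>p q. pdist p \<and> joint_pdist q \<longrightarrow>
        (\<forall>rs. channel rs \<and> (\<forall>y x. ymarg q y \<noteq> 0 \<longrightarrow> rs y x = q x y / ymarg q y) \<longrightarrow>
           (\<forall>r. channel r \<longrightarrow> F_LP \<alpha> W p q r \<le> F_LP \<alpha> W p q rs)))
   \<and> (\<forall>q r. joint_pdist q \<and> channel r \<longrightarrow>
        pdist (xmarg q) \<and> (\<forall>p. pdist p \<longrightarrow> F_LP \<alpha> W p q r \<le> F_LP \<alpha> W (xmarg q) q r))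
   \<and> (\<forall>p r. pdist p \<and> channel r \<and> (\<Sum>x\<in>UNIV. qhatX_num \<alpha> W p r x) > 0 \<longrightarrow>
        joint_pdist (qstar \<alpha> W p r) \<and>
        (\<forall>q. joint_pdist q \<longrightarrow> F_LP \<alpha> W p q r \<le> F_LP \<alpha> W p (qstar \<alpha> W p r) r))"
proof (intro conjI allI impI)
  fix p :: "'x \<Rightarrow> real" and q :: "'x \<Rightarrow> 'y \<Rightarrow> real" and rs r :: "'y \<Rightarrow> 'x \<Rightarrow> real"
  assume h: "pdist p \<and> joint_pdist q"
    "channel rs \<and> (\<forall>y x. ymarg q y \<noteq> 0 \<longrightarrow> rs y x = q x y / ymarg q y)" "channel r"
  then have "exp_log_term q r \<le> exp_log_term q rs" using part1 by blast
  then show "F_LP \<alpha> W p q r \<le> F_LP \<alpha> W p q rs"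
    unfolding F_LP_def by (intro add_mono order_refl) auto
next
  fix q :: "'x \<Rightarrow> 'y \<Rightarrow> real" and r :: "'y \<Rightarrow> 'x \<Rightarrow> real"
  assume "joint_pdist q \<and> channel r"
  then show "pdist (xmarg q)"
    by (auto simp: pdist_def joint_pdist_def xmarg_def intro: sum_nonneg)
next
  fix q :: "'x \<Rightarrow> 'y \<Rightarrow> real" and r :: "'y \<Rightarrow> 'x \<Rightarrow> real" and p :: "'x \<Rightarrow> real"
  assume "joint_pdist q \<and> channel r" "pdist p"
  then show "F_LP \<alpha> W p q r \<le> F_LP \<alpha> W (xmarg q) q r" using part2(2)[OF assms(1)] by blast
next
  fix p :: "'x \<Rightarrow> real" and r :: "'y \<Rightarrow> 'x \<Rightarrow> real"
  assume "pdist p \<and> channel r \<and> (\<Sum>x\<in>UNIV. qhatX_num \<alpha> W p r x) > 0"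
  then show "joint_pdist (qstar \<alpha> W p r)" using joint_qstar[OF assms(2)] by blast
next
  fix p :: "'x \<Rightarrow> real" and r :: "'y \<Rightarrow> 'x \<Rightarrow> real" and q :: "'x \<Rightarrow> 'y \<Rightarrow> real"
  assume "pdist p \<and> channel r \<and> (\<Sum>x\<in>UNIV. qhatX_num \<alpha> W p r x) > 0" "joint_pdist q"
  then show "F_LP \<alpha> W p q r \<le> F_LP \<alpha> W p (qstar \<alpha> W p r) r"
    using part3[OF assms(1,2)] by blast
qed

end
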